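(* Let $d\ge1$, let $Z$ be a simple $d$-cycle, and let $s\ge1$. Deleting any $s$ vertices from the facet graph $G_d(Z)$ leaves a graph with at most $s$ connected components.
   Context: Fix a field $\mathbb F$. A $d$-simplex is a $(d+1)$-element subset of $[n]$ oriented by increasing order $s_1<\dots<s_{d+1}$. A $d$-chain is a formal $\mathbb F$-combination of $d$-simplices with support the set of simplices with nonzero coefficient; $\partial\sigma=\sum_i(-1)^{i-1}(\sigma\setminus\{s_i\})$, extended linearly. A $d$-cycle is a chain with $\partial Z=0$; it is simple if $Z\ne0$ and every $d$-cycle supported in $\mathrm{Supp}(Z)$ is a scalar multiple of $Z$. The facet graph $G_d(Z)$ has vertex set $\mathrm{Supp}(Z)$, two $d$-simplices adjacent iff they share a $(d-1)$-face. *)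

theory Defs
  imports Main
begin

text \<open>Simplices on the vertex set [n] = {1..n} are finite sets of naturals;
  a d-simplex is a (d+1)-element subset of {1..n}, oriented by increasing order.\<close>

definition simplex :: "nat \<Rightarrow> nat \<Rightarrow> nat set \<Rightarrow> bool" where
  "simplex n d \<sigma> \<longleftrightarrow> \<sigma> \<subseteq> {1..n} \<and> card \<sigma> = d + 1"

definition supp :: "(nat set \<Rightarrow> 'a::zero) \<Rightarrow> nat set set" where
  "supp Z = {\<sigma>. Z \<sigma> \<noteq> 0}"

definition chain :: "nat \<Rightarrow> nat \<Rightarrow> (nat set \<Rightarrow> 'a::zero) \<Rightarrow> bool" where
  "chain n d Z \<longleftrightarrow> finite (supp Z) \<and> (\<forall>\<sigma>\<in>supp Z. simplex n d \<sigma>)"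

text \<open>Boundary: removing the i-th smallest vertex v of \<sigma> (i = 1 + number of
  elements of \<sigma> below v) contributes the sign (-1)^(i-1).\<close>
definition bd :: "(nat set \<Rightarrow> 'a::field) \<Rightarrow> nat set \<Rightarrow> 'a" where
  "bd Z \<tau> = (\<Sum>\<sigma>\<in>{\<sigma>\<in>supp Z. \<exists>v. v \<notin> \<tau> \<and> \<sigma> = insert v \<tau>}.
      (-1) ^ card {x\<in>\<sigma>. x < the_elem (\<sigma> - \<tau>)} * Z \<sigma>)"

definition cycle :: "nat \<Rightarrow> nat \<Rightarrow> (nat set \<Rightarrow> 'a::field) \<Rightarrow> bool" where
  "cycle n d Z \<longleftrightarrow> chain n d Z \<and> bd Z = (\<lambda>_. 0)"

definition simple_cycle :: "nat \<Rightarrow> nat \<Rightarrow> (nat set \<Rightarrow> 'a::field) \<Rightarrow> bool" where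
  "simple_cycle n d Z \<longleftrightarrow> cycle n d Z \<and> Z \<noteq> (\<lambda>_. 0) \<and>
     (\<forall>W. cycle n d W \<and> supp W \<subseteq> supp Z \<longrightarrow> (\<exists>c. W = (\<lambda>\<sigma>. c * Z \<sigma>)))"

text \<open>Adjacency in the facet graph: distinct d-simplices sharing a (d-1)-face,
  i.e. a common d-element subset.\<close>
definition facet_adj :: "nat \<Rightarrow> nat set \<Rightarrow> nat set \<Rightarrow> bool" where
  "facet_adj d \<sigma> \<tau> \<longleftrightarrow> \<sigma> \<noteq> \<tau> \<and> (\<exists>\<rho>. \<rho> \<subseteq> \<sigma> \<and> \<rho> \<subseteq> \<tau> \<and> card \<rho> = d)"

definition components :: "'v set \<Rightarrow> ('v \<Rightarrow> 'v \<Rightarrow> bool) \<Rightarrow> 'v set set" where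
  "components V adj = V // ({(x, y). x \<in> V \<and> y \<in> V \<and> adj x y}\<^sup>*)"

end

theory Submission imports Defs begin

lemma bd_alt:
  fixes Z :: "nat set \<Rightarrow> 'a::field"
  assumes U: "finite U" and sub: "\<forall>\<sigma>\<in>supp Z. \<sigma> \<subseteq> U"
  shows "bd Z \<tau> = (\<Sum>v\<in>U-\<tau>. (-1)^card{x\<in>insert v \<tau>. x<v} * Z (insert v \<tau>))"
proof -
  let ?G = "{v\<in>U-\<tau>. Z (insert v \<tau>) \<noteq> 0}"
  have F: "{\<sigma>\<in>supp Z. \<exists>v. v\<notin>\<tau> \<and> \<sigma> = insert v \<tau>} = (\<lambda>v. insert v \<tau>) ` ?G"
    using sub by (auto simp: supp_def)
  have inj: "inj_on (\<lambda>v. insert v \<tau>) ?G"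
    unfolding inj_on_def by blast
  have te: "the_elem (insert v \<tau> - \<tau>) = v" if "v \<notin> \<tau>" for v
  proof -
    have "insert v \<tau> - \<tau> = {v}" using that by auto
    then show ?thesis by simp
  qed
  have "bd Z \<tau> = (\<Sum>v\<in>?G. (-1)^card{x\<in>insert v \<tau>. x<v} * Z (insert v \<tau>))"
    unfolding bd_def F sum.reindex[OF inj] by (rule sum.cong) (auto simp: te)
  also have "\<dots> = (\<Sum>v\<in>U-\<tau>. (-1)^card{x\<in>insert v \<tau>. x<v} * Z (insert v \<tau>))"
    by (rule sum.mono_neutral_left) (use U in auto)
  finally show ?thesis .
qed

lemma bd_bd:
  fixes Z :: "nat set \<Rightarrow> 'a::field"
  assumes U: "finite U" and sub: "\<forall>\<sigma>\<in>supp Z. \<sigma> \<subseteq> U"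
  shows "bd (bd Z) \<rho> = 0"
proof -
  have sub2: "\<forall>\<tau>\<in>supp (bd Z). \<tau> \<subseteq> U"
  proof
    fix \<tau> assume "\<tau> \<in> supp (bd Z)"
    then have "bd Z \<tau> \<noteq> 0" by (simp add: supp_def)
    then obtain v where "v \<in> U-\<tau>" "Z (insert v \<tau>) \<noteq> 0"
      using bd_alt[OF U sub, of \<tau>] by (metis (no_types, lifting) mult_zero_right sum.neutral)
    then show "\<tau> \<subseteq> U" using sub by (auto simp: supp_def)
  qed
  define A where "A = U - \<rho>"
  define c where "c u = card {x\<in>\<rho>. x<u}" for u
  define g where "g u v = (-1::'a)^(c u + c v) * (if u<v then -1 else 1) * Z (insert v (insert u \<rho>))" for u v
  have fin: "finite A" using U A_def by simp
  have "bd (bd Z) \<rho> = (\<Sum>u\<in>A. (-1)^card{x\<in>insert u \<rho>. x<u} * bd Z (insert u \<rho>))"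
    using bd_alt[OF U sub2] A_def by simp
  also have "\<dots> = (\<Sum>u\<in>A. \<Sum>v\<in>A-{u}. g u v)"
  proof (rule sum.cong[OF refl])
    fix u assume u: "u \<in> A"
    have e1: "U - insert u \<rho> = A - {u}" using A_def by auto
    have b: "bd Z (insert u \<rho>) = (\<Sum>v\<in>A-{u}. (-1)^card{x\<in>insert v (insert u \<rho>). x<v} * Z (insert v (insert u \<rho>)))"
      using bd_alt[OF U sub, of "insert u \<rho>"] e1 by simp
    have cu: "card{x\<in>insert u \<rho>. x<u} = c u" unfolding c_def by (auto intro!: arg_cong[where f=card])
    have cv: "(-1::'a)^card{x\<in>insert v (insert u \<rho>). x<v} = (-1)^c v * (if u<v then -1 else 1)" if "v\<in>A-{u}" for v
    proof -
      have "{x\<in>insert v (insert u \<rho>). x<v} = (if u<v then insert u {x\<in>\<rho>. x<v} else {x\<in>\<rho>. x<v})" by auto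
      moreover have "u \<notin> {x\<in>\<rho>. x<v}" using u A_def by auto
      moreover have "finite {x\<in>\<rho>. x<v}" by (rule finite_subset[of _ "{..<v}"]) auto
      ultimately show ?thesis using c_def by auto
    qed
    show "(-1)^card{x\<in>insert u \<rho>. x<u} * bd Z (insert u \<rho>) = (\<Sum>v\<in>A-{u}. g u v)"
      unfolding b cu sum_distrib_left
    proof (rule sum.cong[OF refl])
      fix v assume v: "v \<in> A - {u}"
      show "(-1)^c u * ((-1)^card{x\<in>insert v (insert u \<rho>). x<v} * Z (insert v (insert u \<rho>))) = g u v"
        unfolding cv[OF v] g_def by (simp add: power_add mult_ac)
    qed
  qed
  also have "\<dots> = (\<Sum>u\<in>A. \<Sum>v\<in>{v. v\<in>A \<and> v<u}. g u v) + (\<Sum>u\<in>A. \<Sum>v\<in>{v. v\<in>A \<and> u<v}. g u v)"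
  proof -
    have "(\<Sum>v\<in>A-{u}. g u v) = (\<Sum>v\<in>{v. v\<in>A \<and> v<u}. g u v) + (\<Sum>v\<in>{v. v\<in>A \<and> u<v}. g u v)" for u
    proof -
      have "A - {u} = {v. v\<in>A \<and> v<u} \<union> {v. v\<in>A \<and> u<v}" by auto
      moreover have "(\<Sum>v\<in>{v. v\<in>A \<and> v<u} \<union> {v. v\<in>A \<and> u<v}. g u v) = (\<Sum>v\<in>{v. v\<in>A \<and> v<u}. g u v) + (\<Sum>v\<in>{v. v\<in>A \<and> u<v}. g u v)"
        by (rule sum.union_disjoint) (use fin in auto)
      ultimately show ?thesis by simp
    qed
    then show ?thesis by (simp add: sum.distrib)
  qed
  also have "(\<Sum>u\<in>A. \<Sum>v\<in>{v. v\<in>A \<and> u<v}. g u v) = (\<Sum>v\<in>A. \<Sum>u\<in>{u. u\<in>A \<and> u<v}. g u v)"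
    by (rule sum.swap_restrict[OF fin fin])
  also have "\<dots> = - (\<Sum>v\<in>A. \<Sum>u\<in>{u. u\<in>A \<and> u<v}. g v u)"
  proof -
    have "g u v = - g v u" if "u < v" for u v
      using that unfolding g_def by (simp add: insert_commute add.commute)
    then show ?thesis by (simp add: sum_negf)
  qed
  finally show ?thesis by simp
qed

lemma bd_nz:
  fixes W :: "nat set \<Rightarrow> 'a::field"
  assumes "bd W \<tau> \<noteq> 0"
  shows "\<exists>\<sigma>\<in>supp W. \<exists>v. v\<notin>\<tau> \<and> \<sigma> = insert v \<tau>"
proof (rule ccontr)
  assume "\<not> ?thesis"
  then have "{\<sigma>\<in>supp W. \<exists>v. v \<notin> \<tau> \<and> \<sigma> = insert v \<tau>} = {}" by blast
  then have "bd W \<tau> = 0" unfolding bd_def by (simp only: sum.empty)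
  with assms show False by simp
qed

lemma cycle_card:
  fixes C :: "nat set \<Rightarrow> 'a::field"
  assumes bdC: "bd C = (\<lambda>_. 0)" and \<rho>: "\<rho> \<in> supp C"
    and cards: "\<forall>\<tau>\<in>supp C. finite \<tau> \<and> card \<tau> = d" and fin: "finite (supp C)"
  shows "d + 1 \<le> card (supp C)"
proof -
  have "\<forall>x\<in>\<rho>. \<exists>\<sigma>. \<sigma> \<in> supp C \<and> \<sigma> \<noteq> \<rho> \<and> \<rho> - {x} \<subseteq> \<sigma>"
  proof
    fix x assume x: "x\<in>\<rho>"
    let ?F = "{\<sigma>\<in>supp C. \<exists>v. v \<notin> \<rho>-{x} \<and> \<sigma> = insert v (\<rho>-{x})}"
    have rF: "\<rho> \<in> ?F" using \<rho> x by (auto intro!: exI[of _ x] simp: insert_absorb)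
    show "\<exists>\<sigma>. \<sigma> \<in> supp C \<and> \<sigma> \<noteq> \<rho> \<and> \<rho> - {x} \<subseteq> \<sigma>"
    proof (rule ccontr)
      assume "\<not> ?thesis"
      then have "?F = {\<rho>}" using rF by auto
      then have "bd C (\<rho>-{x}) = (-1)^card{y\<in>\<rho>. y < the_elem (\<rho> - (\<rho>-{x}))} * C \<rho>"
        unfolding bd_def by simp
      moreover have "C \<rho> \<noteq> 0" using \<rho> by (simp add: supp_def)
      ultimately have "bd C (\<rho>-{x}) \<noteq> 0" by simp
      with bdC show False by simp
    qed
  qed
  from bchoice[OF this] obtain f where f: "\<forall>x\<in>\<rho>. f x \<in> supp C \<and> f x \<noteq> \<rho> \<and> \<rho>-{x} \<subseteq> f x" by blast
  have inj: "inj_on f \<rho>"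
  proof (rule inj_onI, rule ccontr)
    fix x y assume x: "x\<in>\<rho>" and y: "y\<in>\<rho>" and e: "f x = f y" and ne: "x \<noteq> y"
    have fx: "\<rho>-{x} \<subseteq> f x" and fy: "\<rho>-{y} \<subseteq> f y" using f x y by auto
    have sub: "\<rho> \<subseteq> f x"
    proof
      fix z assume z: "z \<in> \<rho>"
      show "z \<in> f x"
      proof (cases "z = x")
        case True then have "z \<in> \<rho>-{y}" using z ne by simp
        then show ?thesis using fy e by auto
      next
        case False then show ?thesis using z fx by auto
      qed
    qed
    have fin1: "finite (f x)" and c1: "card (f x) = d" using cards f x by auto
    have c2: "card \<rho> = d" using cards \<rho> by auto
    have "\<rho> = f x" by (rule card_subset_eq[OF fin1 sub]) (simp add: c1 c2)
    with f x show False by auto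
  qed
  have "insert \<rho> (f ` \<rho>) \<subseteq> supp C" using f \<rho> by auto
  moreover have "\<rho> \<notin> f ` \<rho>" using f by auto
  moreover have "finite \<rho>" "card \<rho> = d" using cards \<rho> by auto
  ultimately have "card (insert \<rho> (f ` \<rho>)) = d + 1" using card_image[OF inj] by simp
  then show ?thesis using card_mono[OF fin \<open>insert \<rho> (f ` \<rho>) \<subseteq> supp C\<close>] by simp
qed

lemma facet_adj_sym: "facet_adj d x y \<Longrightarrow> facet_adj d y x"
  unfolding facet_adj_def by blast

theorem theorem5p5:
  fixes Z :: "nat set \<Rightarrow> 'a::field" and n d s :: nat and S :: "nat set set"
  assumes "d \<ge> 1" and "simple_cycle n d Z" and "s \<ge> 1"
    and "S \<subseteq> supp Z" and "card S = s"
  shows "card (components (supp Z - S) (facet_adj d)) \<le> s"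
proof -
  have cyc: "cycle n d Z" and simp: "\<forall>W. cycle n d W \<and> supp W \<subseteq> supp Z \<longrightarrow> (\<exists>c. W = (\<lambda>\<sigma>. c * Z \<sigma>))"
    using assms(2) unfolding simple_cycle_def by auto
  have finZ: "finite (supp Z)" and smp: "\<forall>\<sigma>\<in>supp Z. simplex n d \<sigma>" and bdZ: "bd Z = (\<lambda>_. 0)"
    using cyc unfolding cycle_def chain_def by auto
  have finS: "finite S" by (rule card_ge_0_finite) (use assms(3,5) in simp)
  obtain \<sigma>0 where \<sigma>0: "\<sigma>0 \<in> S" using assms(3,5) by (metis all_not_in_conv card.empty not_one_le_zero)
  define X where "X = supp Z - S"
  define R where "R = {(x, y). x \<in> X \<and> y \<in> X \<and> facet_adj d x y}"
  define comps where "comps = X // (R\<^sup>*)"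
  have comps_eq: "components (supp Z - S) (facet_adj d) = comps"
    unfolding comps_def R_def X_def components_def by simp
  define ZC where "ZC C = (\<lambda>\<sigma>. if \<sigma> \<in> C then Z \<sigma> else 0)" for C
  define FS where "FS = (\<Union>\<sigma>\<in>S. {\<tau>. \<tau> \<subseteq> \<sigma> \<and> card \<tau> = d})"
  have finX: "finite X" using finZ X_def by simp
  have symR: "sym (R\<^sup>*)" by (rule sym_rtrancl) (auto simp: sym_def R_def intro: facet_adj_sym)
  have cinX: "C \<subseteq> X" and cne: "C \<noteq> {}" if "C \<in> comps" for C
  proof -
    obtain x where x: "x \<in> X" and C: "C = R\<^sup>* `` {x}" using \<open>C \<in> comps\<close> unfolding comps_def quotient_def by blast
    show "C \<noteq> {}" using x C by auto
    show "C \<subseteq> X"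
    proof
      fix y assume "y \<in> C"
      then have "(x, y) \<in> R\<^sup>*" using C by simp
      then show "y \<in> X" using x by (cases rule: rtranclE) (auto simp: R_def)
    qed
  qed
  have cclos: "\<sigma>' \<in> C" if "C \<in> comps" "\<sigma> \<in> C" "\<sigma>' \<in> X" "facet_adj d \<sigma> \<sigma>'" for C \<sigma> \<sigma>'
  proof -
    obtain x where x: "x \<in> X" and C: "C = R\<^sup>* `` {x}" using \<open>C \<in> comps\<close> unfolding comps_def quotient_def by blast
    have "(x, \<sigma>) \<in> R\<^sup>*" using that C by simp
    moreover have "(\<sigma>, \<sigma>') \<in> R" using that cinX R_def by blast
    ultimately have "(x, \<sigma>') \<in> R\<^sup>*" by (rule rtrancl_into_rtrancl)
    then show ?thesis using C by simp
  qed
  have cuniq: "C = C'" if "C \<in> comps" "C' \<in> comps" "\<sigma> \<in> C" "\<sigma> \<in> C'" for C C' \<sigma>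
  proof -
    obtain x where x: "x \<in> X" and C: "C = R\<^sup>* `` {x}" using \<open>C \<in> comps\<close> unfolding comps_def quotient_def by blast
    obtain y where y: "y \<in> X" and C': "C' = R\<^sup>* `` {y}" using \<open>C' \<in> comps\<close> unfolding comps_def quotient_def by blast
    have "(x, \<sigma>) \<in> R\<^sup>*" "(y, \<sigma>) \<in> R\<^sup>*" using that C C' by auto
    then have xy: "(x, y) \<in> R\<^sup>*" and yx: "(y, x) \<in> R\<^sup>*" using symR by (meson rtrancl_trans symD)+
    show ?thesis unfolding C C'
    proof
      show "R\<^sup>* `` {x} \<subseteq> R\<^sup>* `` {y}" using yx by (auto intro: rtrancl_trans)
      show "R\<^sup>* `` {y} \<subseteq> R\<^sup>* `` {x}" using xy by (auto intro: rtrancl_trans)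
    qed
  qed
  have finFS: "finite FS" unfolding FS_def
  proof (rule finite_UN_I[OF finS])
    fix \<sigma> assume "\<sigma> \<in> S"
    then have "finite \<sigma>" using smp assms(4) unfolding simplex_def by (meson finite_atLeastAtMost finite_subset subsetD)
    then show "finite {\<tau>. \<tau> \<subseteq> \<sigma> \<and> card \<tau> = d}" by (rule finite_subset[rotated, OF finite_Pow_iff[THEN iffD2]]) auto
  qed
  have cardFS: "card FS \<le> (d+1) * s"
  proof -
    have "card FS \<le> (\<Sum>\<sigma>\<in>S. card {\<tau>. \<tau> \<subseteq> \<sigma> \<and> card \<tau> = d})" unfolding FS_def by (rule card_UN_le[OF finS])
    also have "\<dots> = (\<Sum>\<sigma>\<in>S. d + 1)"
    proof (rule sum.cong[OF refl])
      fix \<sigma> assume "\<sigma> \<in> S"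
      then have c: "card \<sigma> = d + 1" using smp assms(4) unfolding simplex_def by auto
      then have "finite \<sigma>" by (metis card.infinite add_is_0 one_neq_zero)
      then have "card {\<tau>. \<tau> \<subseteq> \<sigma> \<and> card \<tau> = d} = (d+1) choose d" using n_subsets c by metis
      also have "\<dots> = d + 1" by (metis Suc_eq_plus1 binomial_Suc_n)
      finally show "card {\<tau>. \<tau> \<subseteq> \<sigma> \<and> card \<tau> = d} = d + 1" .
    qed
    also have "\<dots> = (d+1) * s" using assms(5) by simp
    finally show ?thesis .
  qed
  define B where "B C = supp (bd (ZC C))" for C
  have suppZC: "supp (ZC C) = supp Z \<inter> C" for C unfolding supp_def ZC_def by auto
  have Bface: "\<exists>\<sigma>\<in>C \<inter> supp Z. \<exists>v. v \<notin> \<tau> \<and> \<sigma> = insert v \<tau> \<and> finite \<tau> \<and> card \<tau> = d"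
    if "\<tau> \<in> B C" for C \<tau>
  proof -
    have "bd (ZC C) \<tau> \<noteq> 0" using that unfolding B_def supp_def by simp
    from bd_nz[OF this] obtain \<sigma> v where \<sigma>: "\<sigma> \<in> supp Z \<inter> C" and v: "v \<notin> \<tau>" "\<sigma> = insert v \<tau>"
      using suppZC by blast
    have "simplex n d \<sigma>" using \<sigma> smp by auto
    then have c: "card \<sigma> = d + 1" and "finite \<sigma>" unfolding simplex_def
      by (auto intro: finite_subset[OF _ finite_atLeastAtMost])
    then have "finite \<tau>" using v by simp
    moreover have "card \<tau> = d" using c v \<open>finite \<tau>\<close> by simp
    ultimately show ?thesis using \<sigma> v by blast
  qed
  have BFS: "B C \<subseteq> FS" if C: "C \<in> comps" for C
  proof
    fix \<tau> assume \<tau>: "\<tau> \<in> B C"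
    obtain \<sigma> v where \<sigma>: "\<sigma> \<in> C \<inter> supp Z" and v: "v \<notin> \<tau>" "\<sigma> = insert v \<tau>" and ft: "finite \<tau>" "card \<tau> = d"
      using Bface[OF \<tau>] by blast
    have "\<exists>\<sigma>'\<in>supp Z. \<sigma>' \<notin> C \<and> (\<exists>w. w \<notin> \<tau> \<and> \<sigma>' = insert w \<tau>)"
    proof (rule ccontr)
      assume nex: "\<not> ?thesis"
      have "{\<sigma>\<in>supp (ZC C). \<exists>v. v \<notin> \<tau> \<and> \<sigma> = insert v \<tau>} = {\<sigma>\<in>supp Z. \<exists>v. v \<notin> \<tau> \<and> \<sigma> = insert v \<tau>}"
        using nex suppZC by blast
      moreover have "ZC C \<sigma> = Z \<sigma>" if "\<sigma> \<in> {\<sigma>\<in>supp Z. \<exists>v. v \<notin> \<tau> \<and> \<sigma> = insert v \<tau>}" for \<sigma>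
        using that nex unfolding ZC_def by auto
      ultimately have "bd (ZC C) \<tau> = bd Z \<tau>" unfolding bd_def
        by (intro sum.cong) auto
      moreover have "bd (ZC C) \<tau> \<noteq> 0" using \<tau> unfolding B_def supp_def by simp
      ultimately show False using bdZ by simp
    qed
    then obtain \<sigma>' w where \<sigma>': "\<sigma>' \<in> supp Z" "\<sigma>' \<notin> C" and w: "w \<notin> \<tau>" "\<sigma>' = insert w \<tau>" by blast
    have adj: "facet_adj d \<sigma> \<sigma>'" unfolding facet_adj_def using \<sigma> \<sigma>' v w ft by blast
    have "\<sigma>' \<notin> X" using cclos[OF C _ _ adj] \<sigma> \<sigma>' by blast
    then have "\<sigma>' \<in> S" using \<sigma>' X_def by blast
    then show "\<tau> \<in> FS" unfolding FS_def using w ft by blast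
  qed
  have Bdisj: "B C \<inter> B C' = {}" if "C \<in> comps" "C' \<in> comps" "C \<noteq> C'" for C C'
  proof (rule ccontr)
    assume "B C \<inter> B C' \<noteq> {}"
    then obtain \<tau> where "\<tau> \<in> B C" "\<tau> \<in> B C'" by blast
    then obtain \<sigma> v \<sigma>' w where \<sigma>: "\<sigma> \<in> C \<inter> supp Z" and v: "v \<notin> \<tau>" "\<sigma> = insert v \<tau>" and ft: "finite \<tau>" "card \<tau> = d"
      and \<sigma>': "\<sigma>' \<in> C' \<inter> supp Z" and w: "w \<notin> \<tau>" "\<sigma>' = insert w \<tau>"
      using Bface by metis
    show False
    proof (cases "\<sigma> = \<sigma>'")
      case True then show ?thesis using cuniq[OF that(1,2)] \<sigma> \<sigma>' that(3) by blast
    next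
      case False
      then have adj: "facet_adj d \<sigma> \<sigma>'" unfolding facet_adj_def using v w ft by blast
      have "\<sigma>' \<in> X" using cinX[OF that(2)] \<sigma>' by blast
      then have "\<sigma>' \<in> C" using cclos[OF that(1) _ _ adj] \<sigma> by blast
      then show ?thesis using cuniq[OF that(1,2)] \<sigma>' that(3) by blast
    qed
  qed
  have Bcard: "d + 1 \<le> card (B C)" if C: "C \<in> comps" for C
  proof -
    have sub: "\<forall>\<sigma>\<in>supp (ZC C). \<sigma> \<subseteq> {1..n}" using smp suppZC unfolding simplex_def by blast
    have bdbd: "bd (bd (ZC C)) = (\<lambda>_. 0)" using bd_bd[OF _ sub] by auto
    have ne: "B C \<noteq> {}"
    proof
      assume "B C = {}"
      then have bd0: "bd (ZC C) = (\<lambda>_. 0)" unfolding B_def supp_def by auto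
      have "cycle n d (ZC C)" unfolding cycle_def chain_def
        using bd0 suppZC finZ smp by auto
      moreover have "supp (ZC C) \<subseteq> supp Z" using suppZC by auto
      ultimately obtain c where c: "ZC C = (\<lambda>\<sigma>. c * Z \<sigma>)" using simp by blast
      have "\<sigma>0 \<notin> C" using cinX[OF C] \<sigma>0 X_def by blast
      then have "c * Z \<sigma>0 = 0" using c ZC_def by metis
      moreover have "Z \<sigma>0 \<noteq> 0" using \<sigma>0 assms(4) supp_def by blast
      ultimately have c0: "c = 0" by simp
      obtain x where x: "x \<in> C" using cne[OF C] by blast
      then have "Z x \<noteq> 0" using cinX[OF C] X_def supp_def by blast
      moreover have "ZC C x = Z x" using x ZC_def by simp
      ultimately show False using c c0 by simp
    qed
    then obtain \<rho> where \<rho>: "\<rho> \<in> B C" by blast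
    show ?thesis unfolding B_def
      by (rule cycle_card[OF bdbd]) (use \<rho> Bface finite_subset[OF BFS[OF C] finFS] in \<open>auto simp: B_def\<close>)
  qed
  have fincomps: "finite comps"
  proof (rule finite_subset[of _ "Pow X"])
    show "comps \<subseteq> Pow X" using cinX by blast
  qed (use finX in simp)
  have "(d+1) * card comps = (\<Sum>C\<in>comps. d + 1)" by simp
  also have "\<dots> \<le> (\<Sum>C\<in>comps. card (B C))" by (rule sum_mono) (rule Bcard)
  also have "\<dots> = card (\<Union>C\<in>comps. B C)"
    by (rule card_UN_disjoint[symmetric]) (use fincomps Bdisj finite_subset[OF BFS finFS] in auto)
  also have "\<dots> \<le> card FS" by (rule card_mono[OF finFS]) (use BFS in blast)
  also have "\<dots> \<le> (d+1) * s" by (rule cardFS)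
  finally have "(d+1) * card comps \<le> (d+1) * s" .
  then have "card comps \<le> s" using mult_le_cancel1[of "d+1" "card comps" s] by simp
  then show ?thesis using comps_eq by simp
qed

end
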